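(* Let $\alpha\in\mathbb{R}\setminus\{0\}$ and $n\in\mathbb{N}$. Let $I_n$ and $f$ be as defined in the context. Then $f$ maps $I_n\setminus\{n\}$ into $(-1,1)\cup\{(-1)^n\}$. Moreover, for $x\in I_n\setminus\{n\}$ we have $f(x)=(-1)^n$ if and only if $$\left|\cos x\pi+\frac{\alpha}{4x}\sin x\pi\right|=1,$$ and $$\lim_{x\in I_n,\;x\to n} f(x)=(-1)^{n+1}.$$
   Context: Put $g(x)=\cos x\pi+\frac{\alpha}{4x}\sin x\pi$ for $x>0$. For $n\in\mathbb{N}$, let $I_n$ be the connected component containing $n$ of the set $\{x>0:\ |g(x)|\ge 1\}$; note that $|g(n)|=1$. For $x\in I_n\setminus\{n\}$ define $$f(x)=-\cos x\pi+\frac{\sin^2 x\pi}{\frac{\alpha}{4x}\sin x\pi\pm\sqrt{g(x)^2-1}} ,$$ where the sign $\pm$ is the sign of $g(x)$. *)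

theory Defs
  imports "HOL-Analysis.Analysis"
begin

definition gfun :: "real \<Rightarrow> real \<Rightarrow> real" where
  "gfun \<alpha> x = cos (x * pi) + \<alpha> / (4 * x) * sin (x * pi)"

definition Icomp :: "real \<Rightarrow> nat \<Rightarrow> real set" where
  "Icomp \<alpha> n = connected_component_set {x. x > 0 \<and> \<bar>gfun \<alpha> x\<bar> \<ge> 1} (real n)"

definition ffun :: "real \<Rightarrow> real \<Rightarrow> real" where
  "ffun \<alpha> x = - cos (x * pi) + (sin (x * pi))^2 /
      (\<alpha> / (4 * x) * sin (x * pi) + sgn (gfun \<alpha> x) * sqrt ((gfun \<alpha> x)^2 - 1))"

end

theory Submission imports Defs begin

lemma key:
  fixes s c a e R :: real
  assumes cs: "c\<^sup>2 + s\<^sup>2 = 1" and s0: "s \<noteq> 0" and sg: "e = 1 \<or> e = -1"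
    and ge: "e*(c + a * s) \<ge> 1" and R0: "R \<ge> 0" and R2: "R\<^sup>2 = (c+a * s)\<^sup>2 - 1"
  shows "a * s + e*R \<noteq> 0" "R = 0 \<Longrightarrow> -c + s\<^sup>2/(a * s+e*R) = e"
    "R > 0 \<Longrightarrow> \<bar>-c + s\<^sup>2/(a * s+e*R)\<bar> < 1"
proof -
  define \<mu> where "\<mu> = c + a * s + e*R"
  have sm: "e*\<mu> \<ge> 1 + R" using sg ge unfolding \<mu>_def by (auto simp: algebra_simps)
  have D: "a * s + e*R = \<mu> - c" unfolding \<mu>_def by simp
  have s2: "s\<^sup>2 > 0" using s0 by simp
  have cle: "c\<^sup>2 < 1" using cs s2 by linarith
  have "\<mu> \<noteq> c"
  proof
    assume "\<mu> = c"
    then have "e*c \<ge> 1" using sm R0 by simp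
    then have "(e*c)\<^sup>2 \<ge> 1" by (smt (verit) one_le_power)
    then show False using cle sg by (auto simp: power2_eq_square)
  qed
  then show Dne: "a * s + e*R \<noteq> 0" using D by simp
  have f: "-c + s\<^sup>2/(a * s+e*R) = (1 - c*\<mu>)/(\<mu> - c)"
  proof -
    have ne: "\<mu> - c \<noteq> 0" using \<open>\<mu> \<noteq> c\<close> by simp
    have "s\<^sup>2 = 1 - c\<^sup>2" using cs by simp
    hence "-c + s\<^sup>2/(a * s+e*R) = -c + (1 - c\<^sup>2)/(\<mu> - c)" using D by simp
    also have "\<dots> = (1 - c*\<mu>)/(\<mu> - c)" using ne by (simp add: field_simps power2_eq_square)
    finally show ?thesis .
  qed
  show "R = 0 \<Longrightarrow> -c + s\<^sup>2/(a * s+e*R) = e"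
  proof -
    assume "R = 0"
    have "\<mu> = e"
    proof -
      have "(c+a * s)\<^sup>2 = 1" using R2 \<open>R = 0\<close> by simp
      hence "c + a * s = 1 \<or> c + a * s = -1" by (simp add: power2_eq_1_iff)
      thus ?thesis using sg ge \<open>R=0\<close> unfolding \<mu>_def by auto
    qed
    then have "(1 - c*\<mu>)/(\<mu> - c) = e" using \<open>\<mu> \<noteq> c\<close> sg by (auto simp: field_simps)
    then show ?thesis using f by simp
  qed
  show "R > 0 \<Longrightarrow> \<bar>-c + s\<^sup>2/(a * s+e*R)\<bar> < 1"
  proof -
    assume "R > 0"
    have "\<bar>\<mu>\<bar> > 1" using sm sg \<open>R>0\<close> by auto
    hence "1 < \<bar>\<mu>\<bar> * \<bar>\<mu>\<bar>" using less_1_mult by blast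
    hence m2: "\<mu>\<^sup>2 > 1" by (simp add: power2_eq_square)
    have "(1 - c*\<mu>)\<^sup>2 - (\<mu> - c)\<^sup>2 = (1 - c\<^sup>2) * (1 - \<mu>\<^sup>2)"
      by (simp add: power2_eq_square algebra_simps)
    also have "\<dots> = s\<^sup>2 * (1 - \<mu>\<^sup>2)" proof - have "1 - c\<^sup>2 = s\<^sup>2" using cs by simp thus ?thesis by simp qed
    also have "\<dots> < 0" using s2 m2 by (simp add: mult_pos_neg)
    finally have sq: "(1 - c*\<mu>)\<^sup>2 < (\<mu> - c)\<^sup>2" by simp
    have "\<bar>1 - c*\<mu>\<bar> < \<bar>\<mu> - c\<bar>"
    proof -
      have "\<bar>1 - c*\<mu>\<bar>\<^sup>2 < \<bar>\<mu> - c\<bar>\<^sup>2" using sq by simp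
      from power2_less_imp_less[OF this abs_ge_zero] show ?thesis .
    qed
    thus ?thesis unfolding f using \<open>\<mu> \<noteq> c\<close> by (simp add: abs_divide)
  qed
qed

lemma key2:
  fixes s c a e R :: real
  assumes cs: "c\<^sup>2 + s\<^sup>2 = 1" and e2: "e\<^sup>2 = 1" and R2: "R\<^sup>2 = (c+a * s)\<^sup>2 - 1"
    and d1: "a * s + e*R \<noteq> 0" and d2: "s - 2*a*c \<noteq> 0"
  shows "s\<^sup>2/(a * s+e*R) = s*(a * s - e*R)/(s - 2*a*c)"
proof -
  have "(a * s - e*R)*(a * s+e*R) = a\<^sup>2 * s\<^sup>2 - e\<^sup>2*R\<^sup>2" by (simp add: algebra_simps power2_eq_square)
  also have "\<dots> = a\<^sup>2 * s\<^sup>2 - R\<^sup>2" using e2 by simp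
  also have "\<dots> = 1 - c\<^sup>2 - 2*a*c * s" unfolding R2 by (simp add: algebra_simps power2_eq_square)
  also have "\<dots> = s*(s - 2*a*c)" proof - have "1 - c\<^sup>2 = s\<^sup>2" using cs by simp thus ?thesis by (simp add: algebra_simps power2_eq_square) qed
  finally have E: "(a * s - e*R)*(a * s+e*R) = s*(s - 2*a*c)" .
  show ?thesis using d1 d2 by (simp add: frac_eq_eq power2_eq_square) (metis E mult.commute mult.left_commute)
qed

lemma Icomp_basic:
  assumes "n \<ge> 1"
  shows "connected (Icomp \<alpha> n)" "real n \<in> Icomp \<alpha> n"
    "\<And>x. x \<in> Icomp \<alpha> n \<Longrightarrow> x > 0 \<and> \<bar>gfun \<alpha> x\<bar> \<ge> 1"
proof -
  show "connected (Icomp \<alpha> n)" unfolding Icomp_def by (rule connected_connected_component)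
  show "real n \<in> Icomp \<alpha> n" unfolding Icomp_def using assms by (simp add: gfun_def)
  show "\<And>x. x \<in> Icomp \<alpha> n \<Longrightarrow> x > 0 \<and> \<bar>gfun \<alpha> x\<bar> \<ge> 1"
    unfolding Icomp_def using connected_component_subset by blast
qed

lemma gfun_cont: "continuous_on {x. x > 0} (gfun \<alpha>)"
  unfolding gfun_def by (auto intro!: continuous_intros)

lemma Icomp_sign:
  assumes "n \<ge> 1" "x \<in> Icomp \<alpha> n"
  shows "(-1)^n * gfun \<alpha> x \<ge> 1"
proof (rule ccontr)
  assume neg: "\<not> ?thesis"
  let ?I = "Icomp \<alpha> n"
  have sub: "?I \<subseteq> {x. x > 0}" using Icomp_basic(3)[OF assms(1)] by auto
  have "connected (gfun \<alpha> ` ?I)"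
    by (rule connected_continuous_image[OF continuous_on_subset[OF gfun_cont sub] Icomp_basic(1)[OF assms(1)]])
  hence iv: "\<And>u v z. u \<in> gfun \<alpha> ` ?I \<Longrightarrow> v \<in> gfun \<alpha> ` ?I \<Longrightarrow> u \<le> z \<Longrightarrow> z \<le> v \<Longrightarrow> z \<in> gfun \<alpha> ` ?I"
    unfolding connected_iff_interval by blast
  have gn: "gfun \<alpha> (real n) = (-1)^n" by (simp add: gfun_def)
  have n1: "gfun \<alpha> (real n) \<in> gfun \<alpha> ` ?I" using Icomp_basic(2)[OF assms(1)] by blast
  have x1: "gfun \<alpha> x \<in> gfun \<alpha> ` ?I" using assms(2) by blast
  have ax: "\<bar>gfun \<alpha> x\<bar> \<ge> 1" using Icomp_basic(3)[OF assms] by blast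
  have "0 \<in> gfun \<alpha> ` ?I"
  proof (cases "even n")
    case True
    then have "gfun \<alpha> x \<le> 0" using neg ax by auto
    then show ?thesis using iv[OF x1 n1, of 0] gn True by simp
  next
    case False
    then have "gfun \<alpha> x \<ge> 0" using neg ax by auto
    then show ?thesis using iv[OF n1 x1, of 0] gn False by simp
  qed
  then obtain y where "y \<in> ?I" "gfun \<alpha> y = 0" by auto
  then show False using Icomp_basic(3)[OF assms(1)] by fastforce
qed

lemma Icomp_range:
  assumes "n \<ge> 1" "x \<in> Icomp \<alpha> n"
  shows "real n - 1 < x \<and> x < real n + 1"
proof -
  let ?I = "Icomp \<alpha> n"
  have iv: "\<And>u v z. u \<in> ?I \<Longrightarrow> v \<in> ?I \<Longrightarrow> u \<le> z \<Longrightarrow> z \<le> v \<Longrightarrow> z \<in> ?I"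
    using Icomp_basic(1)[OF assms(1)] unfolding connected_iff_interval by blast
  have nI: "real n \<in> ?I" using Icomp_basic(2)[OF assms(1)] .
  have "x < real n + 1"
  proof (rule ccontr)
    assume "\<not> ?thesis"
    then have "real (Suc n) \<in> ?I" using iv[OF nI assms(2), of "real (Suc n)"] by simp
    moreover have "gfun \<alpha> (real (Suc n)) = (-1)^(Suc n)" unfolding gfun_def cos_npi sin_npi by simp
    ultimately show False using Icomp_sign[OF assms(1)] by fastforce
  qed
  moreover have "real n - 1 < x"
  proof (rule ccontr)
    assume a: "\<not> ?thesis"
    show False
    proof (cases "n = 1")
      case True
      then show False using a Icomp_basic(3)[OF assms] by simp
    next
      case False
      then have "real (n - 1) \<in> ?I" using iv[OF assms(2) nI, of "real (n - 1)"] a assms(1) by (simp add: of_nat_diff)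
      moreover have "gfun \<alpha> (real (n-1)) = (-1)^(n-1)" unfolding gfun_def cos_npi sin_npi by simp
      moreover have "(-1::real)^n * (-1)^(n-1) = -1"
      proof -
        have "(-1::real)^n = (-1)^(Suc (n-1))" using assms(1) by simp
        also have "\<dots> = - ((-1)^(n-1))" by simp
        finally have A: "(-1::real)^n * (-1)^(n-1) = - ((-1)^(n-1) * (-1)^(n-1))" by simp
        have "(-1::real)^(n-1) * (-1)^(n-1) = ((-1)*(-1))^(n-1)" by (simp only: power_mult_distrib)
        then show ?thesis using A by simp
      qed
      ultimately show False using Icomp_sign[OF assms(1)] by fastforce
    qed
  qed
  ultimately show ?thesis by simp
qed


lemma main_pt:
  assumes n1: "n \<ge> 1" and xI: "x \<in> Icomp \<alpha> n" and xn: "x \<noteq> real n"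
  shows "sin (x*pi) \<noteq> 0"
    "ffun \<alpha> x = - cos (x*pi) + (sin (x*pi))\<^sup>2 / (\<alpha>/(4*x) * sin (x*pi) + (-1)^n * sqrt ((gfun \<alpha> x)\<^sup>2 - 1))"
    "\<alpha>/(4*x) * sin (x*pi) + (-1)^n * sqrt ((gfun \<alpha> x)\<^sup>2 - 1) \<noteq> 0"
    "ffun \<alpha> x \<in> {-1<..<1} \<union> {(-1) ^ n}"
    "ffun \<alpha> x = (-1) ^ n \<longleftrightarrow> \<bar>gfun \<alpha> x\<bar> = 1"
proof -
  have rg: "real n - 1 < x" "x < real n + 1" using Icomp_range[OF n1 xI] by auto
  show s0: "sin (x*pi) \<noteq> 0"
  proof
    assume "sin (x*pi) = 0"
    then obtain i :: int where "x * pi = of_int i * pi" using sin_zero_iff_int2 by blast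
    then have xi: "x = of_int i" by simp
    then have "int n - 1 < i" "i < int n + 1" using rg by linarith+
    then have "i = int n" by linarith
    then show False using xi xn by simp
  qed
  define e :: real where "e = (-1)^n"
  have sg: "e = 1 \<or> e = -1" unfolding e_def by (cases "even n") auto
  have ge: "e * gfun \<alpha> x \<ge> 1" using Icomp_sign[OF n1 xI] unfolding e_def .
  have sgn: "sgn (gfun \<alpha> x) = e" using sg ge by (auto simp: sgn_if)
  have ag: "\<bar>gfun \<alpha> x\<bar> \<ge> 1" using Icomp_basic(3)[OF n1 xI] by blast
  have g2: "(gfun \<alpha> x)\<^sup>2 \<ge> 1"
  proof -
    have "1 \<le> \<bar>gfun \<alpha> x\<bar> * \<bar>gfun \<alpha> x\<bar>" using ag by (metis mult_mono' mult_1 zero_le_one)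
    thus ?thesis by (simp add: power2_eq_square)
  qed
  define R where "R = sqrt ((gfun \<alpha> x)\<^sup>2 - 1)"
  have R0: "R \<ge> 0" unfolding R_def using g2 by simp
  have R2: "R\<^sup>2 = (cos (x*pi) + \<alpha>/(4*x) * sin (x*pi))\<^sup>2 - 1"
  proof -
    have "R\<^sup>2 = (gfun \<alpha> x)\<^sup>2 - 1" unfolding R_def using g2 by simp
    then show ?thesis unfolding gfun_def .
  qed
  have cs: "(cos (x*pi))\<^sup>2 + (sin (x*pi))\<^sup>2 = 1" by simp
  have ge': "e * (cos (x*pi) + \<alpha>/(4*x) * sin (x*pi)) \<ge> 1" using ge by (simp add: gfun_def)
  note K = key[OF cs s0 sg ge' R0 R2]
  show F: "ffun \<alpha> x = - cos (x*pi) + (sin (x*pi))\<^sup>2 / (\<alpha>/(4*x) * sin (x*pi) + (-1)^n * sqrt ((gfun \<alpha> x)\<^sup>2 - 1))"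
    unfolding ffun_def sgn e_def ..
  show "\<alpha>/(4*x) * sin (x*pi) + (-1)^n * sqrt ((gfun \<alpha> x)\<^sup>2 - 1) \<noteq> 0"
    using K(1) unfolding R_def e_def .
  have F': "ffun \<alpha> x = - cos (x*pi) + (sin (x*pi))\<^sup>2 / (\<alpha>/(4*x) * sin (x*pi) + e * R)"
    using F unfolding R_def e_def .
  have Req: "R = 0 \<longleftrightarrow> \<bar>gfun \<alpha> x\<bar> = 1"
  proof -
    have "R = 0 \<longleftrightarrow> (gfun \<alpha> x)\<^sup>2 = 1" unfolding R_def by simp
    also have "\<dots> \<longleftrightarrow> \<bar>gfun \<alpha> x\<bar> = 1" by (simp add: power2_eq_1_iff abs_if) 
    finally show ?thesis .
  qed
  show "ffun \<alpha> x \<in> {-1<..<1} \<union> {(-1) ^ n}"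
  proof (cases "R = 0")
    case True
    then show ?thesis using K(2) F' unfolding e_def by simp
  next
    case False
    then have "R > 0" using R0 by simp
    then show ?thesis using K(3) F' by auto
  qed
  show "ffun \<alpha> x = (-1) ^ n \<longleftrightarrow> \<bar>gfun \<alpha> x\<bar> = 1"
  proof (cases "R = 0")
    case True
    then show ?thesis using K(2) F' Req unfolding e_def by simp
  next
    case False
    then have "R > 0" using R0 by simp
    then have "\<bar>ffun \<alpha> x\<bar> < 1" using K(3) F' by simp
    then have "ffun \<alpha> x \<noteq> e" using sg by auto
    then show ?thesis using False Req unfolding e_def by simp
  qed
qed


theorem proposition3p2:
  fixes \<alpha> :: real and n :: nat
  assumes "\<alpha> \<noteq> 0" and "n \<ge> 1"
  shows "(\<forall>x \<in> Icomp \<alpha> n - {real n}. ffun \<alpha> x \<in> {-1<..<1} \<union> {(-1) ^ n})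
    \<and> (\<forall>x \<in> Icomp \<alpha> n - {real n}. ffun \<alpha> x = (-1) ^ n \<longleftrightarrow> \<bar>gfun \<alpha> x\<bar> = 1)
    \<and> (ffun \<alpha> \<longlongrightarrow> (-1) ^ (n + 1)) (at (real n) within Icomp \<alpha> n)"
proof (intro conjI ballI)
  fix x assume "x \<in> Icomp \<alpha> n - {real n}"
  then show "ffun \<alpha> x \<in> {-1<..<1} \<union> {(-1) ^ n}" "ffun \<alpha> x = (-1) ^ n \<longleftrightarrow> \<bar>gfun \<alpha> x\<bar> = 1"
    using main_pt[OF assms(2)] by auto
next
  let ?I = "Icomp \<alpha> n"
  define e :: real where "e = (-1)^n"
  have e2: "e\<^sup>2 = 1" unfolding e_def by (simp flip: power_mult)
  define d where "d x = sin (x*pi) - 2*(\<alpha>/(4*x))*cos (x*pi)" for x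
  define h where "h x = - cos (x*pi) + sin (x*pi) * (\<alpha>/(4*x) * sin (x*pi) - e * sqrt ((gfun \<alpha> x)\<^sup>2 - 1)) / d x" for x
  have n0: "real n \<noteq> 0" using assms(2) by simp
  have dn: "d (real n) = - 2*(\<alpha>/(4*real n))*e" unfolding d_def e_def by simp
  have dn0: "d (real n) \<noteq> 0" unfolding dn using assms(1) n0 e2 by auto
  have cd: "isCont d (real n)" unfolding d_def using n0 by (intro continuous_intros) auto
  have ch: "isCont h (real n)" unfolding h_def gfun_def using n0 dn0
    by (intro continuous_intros) (auto simp: d_def)
  have hn: "h (real n) = - e" unfolding h_def e_def by simp
  have "(h \<longlongrightarrow> -e) (at (real n) within ?I)"
    using continuous_at_imp_continuous_at_within[OF ch] hn by (simp add: continuous_within)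
  moreover have "eventually (\<lambda>x. h x = ffun \<alpha> x) (at (real n) within ?I)"
  proof -
    have "(d \<longlongrightarrow> d (real n)) (at (real n) within ?I)"
      using continuous_at_imp_continuous_at_within[OF cd] by (simp add: continuous_within)
    then have ev1: "eventually (\<lambda>x. d x \<noteq> 0) (at (real n) within ?I)"
      using dn0 tendsto_imp_eventually_ne by blast
    have ev2: "eventually (\<lambda>x. x \<in> ?I \<and> x \<noteq> real n) (at (real n) within ?I)"
      by (simp add: eventually_at_filter)
    show ?thesis using ev1 ev2
    proof eventually_elim
      case (elim x)
      then have xI: "x \<in> ?I" and xn: "x \<noteq> real n" and dx: "d x \<noteq> 0" by auto
      note M = main_pt[OF assms(2) xI xn]
      have g2: "(gfun \<alpha> x)\<^sup>2 \<ge> 1"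
      proof -
        have ag: "\<bar>gfun \<alpha> x\<bar> \<ge> 1" using Icomp_basic(3)[OF assms(2) xI] by blast
        have "1 \<le> \<bar>gfun \<alpha> x\<bar> * \<bar>gfun \<alpha> x\<bar>" using ag by (metis mult_mono' mult_1 zero_le_one)
        thus ?thesis by (simp add: power2_eq_square)
      qed
      have R2: "(sqrt ((gfun \<alpha> x)\<^sup>2 - 1))\<^sup>2 = (cos (x*pi) + \<alpha>/(4*x) * sin (x*pi))\<^sup>2 - 1"
      proof -
        have "(sqrt ((gfun \<alpha> x)\<^sup>2 - 1))\<^sup>2 = (gfun \<alpha> x)\<^sup>2 - 1" using g2 by simp
        then show ?thesis unfolding gfun_def .
      qed
      have cs: "(cos (x*pi))\<^sup>2 + (sin (x*pi))\<^sup>2 = 1" by simp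
      have d2: "sin (x*pi) - 2*(\<alpha>/(4*x))*cos (x*pi) \<noteq> 0" using dx unfolding d_def .
      have d1: "\<alpha>/(4*x) * sin (x*pi) + e * sqrt ((gfun \<alpha> x)\<^sup>2 - 1) \<noteq> 0" using M(3) unfolding e_def .
      note K = key2[OF cs e2 R2 d1 d2]
      show ?case unfolding M(2) h_def d_def using K unfolding e_def by simp
    qed
  qed
  ultimately have "(ffun \<alpha> \<longlongrightarrow> -e) (at (real n) within ?I)" using Lim_transform_eventually by blast
  then show "(ffun \<alpha> \<longlongrightarrow> (-1) ^ (n + 1)) (at (real n) within ?I)" unfolding e_def by simp
qed

end
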